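(* Let $r\ge 3$ and let $c_r=\sup\{q_{\min}(G)/v(G): G \text{ is a graph with no } K_{r+1}\}$. Then $1-\frac{2}{r}\le c_r\le 1-\frac{3}{3r-1}$.
   Context: Graphs are finite and simple with at least one vertex; $v(G)$ denotes the number of vertices of $G$; "with no $K_{r+1}$" means containing no complete subgraph on $r+1$ vertices. For a graph $G$ with adjacency matrix $A$ and diagonal degree matrix $D$, the signless Laplacian is $Q(G)=D+A$, and $q_{\min}(G)$ denotes its smallest eigenvalue. *)

theory Defs
  imports "Jordan_Normal_Form.Char_Poly"
begin

definition simple_graph :: "nat \<Rightarrow> (nat \<Rightarrow> nat \<Rightarrow> bool) \<Rightarrow> bool" where
  "simple_graph n E \<longleftrightarrow> n \<ge> 1 \<and>
     (\<forall>i<n. \<not> E i i) \<and> (\<forall>i<n. \<forall>j<n. E i j \<longrightarrow> E j i)"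

definition degree :: "nat \<Rightarrow> (nat \<Rightarrow> nat \<Rightarrow> bool) \<Rightarrow> nat \<Rightarrow> nat" where
  "degree n E i = card {j. j < n \<and> E i j}"

definition has_clique :: "nat \<Rightarrow> (nat \<Rightarrow> nat \<Rightarrow> bool) \<Rightarrow> nat \<Rightarrow> bool" where
  "has_clique n E k \<longleftrightarrow> (\<exists>S. S \<subseteq> {0..<n} \<and> card S = k \<and>
      (\<forall>i\<in>S. \<forall>j\<in>S. i \<noteq> j \<longrightarrow> E i j))"

definition signless_laplacian :: "nat \<Rightarrow> (nat \<Rightarrow> nat \<Rightarrow> bool) \<Rightarrow> real mat" where
  "signless_laplacian n E = mat n n (\<lambda>(i,j).
     (if i = j then real (degree n E i) else 0) + (if E i j then 1 else 0))"

definition q_min :: "nat \<Rightarrow> (nat \<Rightarrow> nat \<Rightarrow> bool) \<Rightarrow> real" where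
  "q_min n E = Min {k. eigenvalue (signless_laplacian n E) k}"

definition c_const :: "nat \<Rightarrow> real" where
  "c_const r = Sup {q_min n E / real n | n E. simple_graph n E \<and> \<not> has_clique n E (r + 1)}"

end

theory Submission imports Defs "HOL-Analysis.Function_Topology" begin

definition qf :: "real mat \<Rightarrow> nat \<Rightarrow> (nat \<Rightarrow> real) \<Rightarrow> real" where
  "qf M n y = (\<Sum>i<n. \<Sum>j<n. M $$ (i,j) * y i * y j)"

definition nsq :: "nat \<Rightarrow> (nat \<Rightarrow> real) \<Rightarrow> real" where
  "nsq n y = (\<Sum>i<n. (y i)^2)"

lemma compact_box: "compact {y::nat\<Rightarrow>real. \<forall>i. y i \<in> (if i<n then {-1..1} else {0})}"
proof -
  have eq: "{y::nat\<Rightarrow>real. \<forall>i. y i \<in> (if i<n then {-1..1} else {0})} = PiE UNIV (\<lambda>i. if i<n then {-1..1} else {0})"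
    by (auto simp: PiE_def Pi_def)
  have "compactin (product_topology (\<lambda>i. euclideanreal) UNIV) (PiE UNIV (\<lambda>i::nat. if i<n then {-1..1::real} else {0}))"
    by (subst compactin_PiE) auto
  then show ?thesis unfolding eq euclidean_product_topology by (simp add: compactin_euclidean_iff)
qed

lemma cont_coord: "continuous_on S (\<lambda>x::nat\<Rightarrow>real. x i)"
  by (rule continuous_on_subset[OF continuous_on_product_coordinates]) auto

lemma cont_qf: "continuous_on S (qf M n)"
  unfolding qf_def by (intro continuous_intros cont_coord)

lemma cont_nsq: "continuous_on S (nsq n)"
  unfolding nsq_def by (intro continuous_intros cont_coord)

lemma qf_add: "qf M n (\<lambda>i. u i + t * v i) = qf M n u
   + t * (\<Sum>i<n. \<Sum>j<n. M$$(i,j) * (u i * v j + v i * u j)) + t^2 * qf M n v"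
  by (simp add: qf_def sum_distrib_left sum.distrib[symmetric] algebra_simps power2_eq_square)

lemma nsq_add: "nsq n (\<lambda>i. u i + t * v i) = nsq n u + 2 * t * (\<Sum>i<n. u i * v i) + t^2 * nsq n v"
  by (simp add: nsq_def sum_distrib_left sum.distrib[symmetric] algebra_simps power2_eq_square)

lemma cross_sym:
  fixes M :: "real mat"
  assumes sym: "\<And>i j. i<n \<Longrightarrow> j<n \<Longrightarrow> M$$(i,j) = M$$(j,i)"
  shows "(\<Sum>i<n. \<Sum>j<n. M$$(i,j) * (u i * v j + v i * u j)) = 2 * (\<Sum>i<n. v i * (\<Sum>j<n. M$$(i,j) * u j))"
proof -
  have "(\<Sum>i<n. \<Sum>j<n. M$$(i,j) * (u i * v j)) = (\<Sum>j<n. \<Sum>i<n. M$$(i,j) * (u i * v j))"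
    by (rule sum.swap)
  also have "\<dots> = (\<Sum>j<n. \<Sum>i<n. v j * (M$$(j,i) * u i))"
    apply (intro sum.cong refl)
    subgoal for j i using sym[of i j] by (simp add: mult_ac)
    done
  also have "\<dots> = (\<Sum>j<n. v j * (\<Sum>i<n. M$$(j,i) * u i))"
    by (simp add: sum_distrib_left)
  finally have 1: "(\<Sum>i<n. \<Sum>j<n. M$$(i,j) * (u i * v j)) = (\<Sum>i<n. v i * (\<Sum>j<n. M$$(i,j) * u j))" .
  have 2: "(\<Sum>i<n. \<Sum>j<n. M$$(i,j) * (v i * u j)) = (\<Sum>i<n. v i * (\<Sum>j<n. M$$(i,j) * u j))"
    by (simp add: sum_distrib_left algebra_simps)
  show ?thesis using 1 2 by (simp add: distrib_left sum.distrib)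
qed

lemma quad_nonneg:
  fixes a c :: real
  assumes "a \<ge> 0" "\<And>t. 2 * t * a + t^2 * c \<ge> 0"
  shows "a = 0"
proof (rule ccontr)
  assume "a \<noteq> 0"
  with assms have a: "a > 0" by auto
  define d where "d = \<bar>c\<bar> + 1"
  define t where "t = - a / d"
  have d: "d > 0" unfolding d_def by auto
  have "2 * t * a + t^2 * c = a^2 * (c - 2 * d) / d^2"
    unfolding t_def using d by (simp add: power2_eq_square divide_simps) (simp add: algebra_simps)
  also have "\<dots> < 0"
    using a d by (intro divide_neg_pos mult_pos_neg) (auto simp: abs_if d_def)
  finally show False using assms(2)[of t] by simp
qed

lemma nsq_zero: "nsq n y = 0 \<Longrightarrow> i < n \<Longrightarrow> y i = 0"
  unfolding nsq_def by (subst (asm) sum_nonneg_eq_0_iff) auto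

lemma qf_zero: "(\<And>i. i < n \<Longrightarrow> y i = 0) \<Longrightarrow> qf M n y = 0"
  unfolding qf_def by simp

lemma qf_cong: "(\<And>i. i < n \<Longrightarrow> y i = z i) \<Longrightarrow> qf M n y = qf M n z"
  unfolding qf_def by (intro sum.cong refl) auto

lemma nsq_cong: "(\<And>i. i < n \<Longrightarrow> y i = z i) \<Longrightarrow> nsq n y = nsq n z"
  unfolding nsq_def by (intro sum.cong refl) auto

lemma min_eig_exists:
  fixes M :: "real mat"
  assumes M: "M \<in> carrier_mat n n"
    and sym: "\<And>i j. i<n \<Longrightarrow> j<n \<Longrightarrow> M$$(i,j) = M$$(j,i)" and n: "n \<ge> 1"
  shows "\<exists>l. eigenvalue M l \<and> (\<forall>y. l * nsq n y \<le> qf M n y)"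
proof -
  define B where "B = {y::nat\<Rightarrow>real. \<forall>i. y i \<in> (if i<n then {-1..1} else {0})}"
  define S where "S = B \<inter> {y. nsq n y = 1}"
  have "compact S" unfolding S_def B_def
    by (intro compact_Int_closed compact_box closed_Collect_eq cont_nsq continuous_on_const) 
  have e0: "(\<lambda>i. if i = 0 then 1 else 0::real) \<in> S"
    using n unfolding S_def B_def nsq_def by (auto simp: power2_eq_square if_distrib cong: if_cong)
  then have "S \<noteq> {}" by auto
  from continuous_attains_inf[OF \<open>compact S\<close> this cont_qf]
  obtain y0 where y0: "y0 \<in> S" and ymin: "\<And>y. y \<in> S \<Longrightarrow> qf M n y0 \<le> qf M n y" by blast
  define l where "l = qf M n y0"
  have ny0: "nsq n y0 = 1" using y0 unfolding S_def by auto
  have ray: "l * nsq n y \<le> qf M n y" for y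
  proof (cases "nsq n y = 0")
    case True
    then show ?thesis using qf_zero[of n y M] nsq_zero[OF True] by simp
  next
    case False
    have ge: "nsq n y \<ge> 0" unfolding nsq_def by (auto intro: sum_nonneg)
    with False have pos: "nsq n y > 0" by auto
    define t where "t = sqrt (nsq n y)"
    have t: "t > 0" "t^2 = nsq n y" using pos unfolding t_def by auto
    define z where "z = (\<lambda>i. if i < n then y i / t else 0)"
    have bound: "\<bar>y i\<bar> \<le> t" if "i < n" for i
    proof -
      have "(y i)^2 \<le> nsq n y" unfolding nsq_def
        using that by (intro member_le_sum) auto
      then show ?thesis using t abs_le_square_iff[of "y i" t] by simp
    qed
    have nz: "nsq n z = nsq n y / t^2"
      unfolding nsq_def z_def by (simp add: power_divide sum_divide_distrib)
    have qz: "qf M n z = qf M n y / t^2"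
      unfolding qf_def z_def by (simp add: power2_eq_square sum_divide_distrib)
    have "z \<in> S" unfolding S_def B_def
      using nz t bound by (auto simp: z_def abs_le_iff divide_simps) (smt (verit) bound)
    then have "l \<le> qf M n y / t^2" using ymin[of z] qz unfolding l_def by simp
    then show ?thesis using t pos by (simp add: divide_simps mult.commute)
  qed
  define w where "w = (\<lambda>i. (\<Sum>j<n. M$$(i,j) * y0 j) - l * y0 i)"
  have F: "2 * t * nsq n w + t^2 * (qf M n w - l * nsq n w) \<ge> 0" for t
  proof -
    have "l * nsq n (\<lambda>i. y0 i + t * w i) \<le> qf M n (\<lambda>i. y0 i + t * w i)" by (rule ray)
    moreover have "(\<Sum>i<n. w i * (\<Sum>j<n. M$$(i,j) * y0 j)) - l * (\<Sum>i<n. y0 i * w i) = nsq n w"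
      unfolding nsq_def w_def by (simp add: sum_subtractf[symmetric] sum_distrib_left power2_eq_square algebra_simps)
    moreover have "qf M n (\<lambda>i. y0 i + t * w i) = qf M n y0
       + t * (2 * (\<Sum>i<n. w i * (\<Sum>j<n. M$$(i,j) * y0 j))) + t^2 * qf M n w"
      using qf_add[of M n y0 t w] cross_sym[OF sym, where u=y0 and v=w] by simp
    ultimately show ?thesis
      unfolding nsq_add using ny0 l_def
      by (simp add: algebra_simps)
  qed
  have "nsq n w \<ge> 0" unfolding nsq_def by (auto intro: sum_nonneg)
  from quad_nonneg[OF this F] have w0: "nsq n w = 0" .
  define v where "v = vec n y0"
  have "eigenvector M v l"
    unfolding eigenvector_def
  proof (intro conjI)
    show "v \<in> carrier_vec (dim_row M)" using M unfolding v_def by auto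
    show "v \<noteq> 0\<^sub>v (dim_row M)"
    proof
      assume "v = 0\<^sub>v (dim_row M)"
      then have "\<And>i. i < n \<Longrightarrow> y0 i = 0" using M unfolding v_def
        by (metis carrier_matD(1) index_vec index_zero_vec(1))
      then have "nsq n y0 = 0" unfolding nsq_def by simp
      then show False using ny0 by simp
    qed
    show "M *\<^sub>v v = l \<cdot>\<^sub>v v"
    proof (rule eq_vecI)
      fix i assume i: "i < dim_vec (l \<cdot>\<^sub>v v)"
      then have i: "i < n" unfolding v_def by simp
      have "(M *\<^sub>v v) $ i = (\<Sum>j<n. M$$(i,j) * y0 j)"
        using M i unfolding v_def by (auto simp: scalar_prod_def atLeast0LessThan intro!: sum.cong)
      also have "\<dots> = l * y0 i" using nsq_zero[OF w0 i] unfolding w_def by simp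
      finally show "(M *\<^sub>v v) $ i = (l \<cdot>\<^sub>v v) $ i" using i unfolding v_def by simp
    qed (use M in \<open>auto simp: v_def\<close>)
  qed
  then have "eigenvalue M l" unfolding eigenvalue_def by blast
  with ray show ?thesis by blast
qed


lemma card_ind: fixes A :: "nat set" shows "A \<subseteq> {..<n} \<Longrightarrow> (\<Sum>v<n. (if v \<in> A then 1 else 0::real)) = real (card A)"
proof -
  assume A: "A \<subseteq> {..<n}"
  have "(\<Sum>v<n. (if v \<in> A then 1 else 0::real)) = (\<Sum>v\<in>{..<n} \<inter> A. 1)"
    by (rule sum.inter_restrict[symmetric]) simp
  also have "{..<n} \<inter> A = A" using A by auto
  finally show ?thesis by simp
qed

lemma degree_sum: "real (degree n E u) = (\<Sum>v<n. if E u v then 1 else 0)"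
proof -
  have "real (degree n E u) = (\<Sum>v<n. (if v \<in> {j. j < n \<and> E u j} then 1 else 0::real))"
    unfolding degree_def by (rule card_ind[symmetric]) auto
  also have "\<dots> = (\<Sum>v<n. if E u v then 1 else 0)"
    by (intro sum.cong refl) auto
  finally show ?thesis .
qed

lemma sl_carrier: "signless_laplacian n E \<in> carrier_mat n n"
  unfolding signless_laplacian_def by simp

lemma sl_sym: "simple_graph n E \<Longrightarrow> i < n \<Longrightarrow> j < n \<Longrightarrow>
   signless_laplacian n E $$ (i,j) = signless_laplacian n E $$ (j,i)"
  unfolding signless_laplacian_def simple_graph_def by auto

lemma qf_sl: "qf (signless_laplacian n E) n y = (\<Sum>u<n. y u * (\<Sum>v<n. (if E u v then 1 else 0) * (y u + y v)))"
proof -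
  have "qf (signless_laplacian n E) n y = (\<Sum>u<n. y u * (\<Sum>v<n. ((if u = v then real (degree n E u) else 0) + (if E u v then 1 else 0)) * y v))"
    unfolding qf_def signless_laplacian_def by (simp add: sum_distrib_left mult_ac)
  also have "\<dots> = (\<Sum>u<n. y u * (real (degree n E u) * y u + (\<Sum>v<n. (if E u v then 1 else 0) * y v)))"
  proof (intro sum.cong refl)
    fix u assume u: "u \<in> {..<n}"
    have "(\<Sum>v<n. ((if u = v then real (degree n E u) else 0) + (if E u v then 1 else 0)) * y v)
       = (\<Sum>v<n. (if u = v then real (degree n E u) else 0) * y v) + (\<Sum>v<n. (if E u v then 1 else 0) * y v)"
      by (simp add: sum.distrib distrib_right)
    also have "(\<Sum>v<n. (if u = v then real (degree n E u) else 0) * y v) = (\<Sum>v<n. (if u = v then real (degree n E u) * y v else 0))"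
      by (intro sum.cong refl) auto
    also have "\<dots> = real (degree n E u) * y u"
      using u by (simp add: sum.delta)
    finally show "y u * (\<Sum>v<n. ((if u = v then real (degree n E u) else 0) + (if E u v then 1 else 0)) * y v) =
         y u * (real (degree n E u) * y u + (\<Sum>v<n. (if E u v then 1 else 0) * y v))" by simp
  qed
  also have "\<dots> = (\<Sum>u<n. y u * (\<Sum>v<n. (if E u v then 1 else 0) * (y u + y v)))"
    by (intro sum.cong refl) (simp add: degree_sum distrib_left sum.distrib sum_distrib_right)
  finally show ?thesis .
qed

lemma eig_finite: "finite {k. eigenvalue (signless_laplacian n E) k}"
proof -
  have c: "signless_laplacian n E \<in> carrier_mat n n" by (rule sl_carrier)
  have "char_poly (signless_laplacian n E) \<noteq> 0"
    using degree_monic_char_poly[OF c] by auto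
  then have "finite {k. poly (char_poly (signless_laplacian n E)) k = 0}"
    by (rule poly_roots_finite)
  then show ?thesis using eigenvalue_root_char_poly[OF c] by simp
qed

lemma qmin_le: "eigenvalue (signless_laplacian n E) l \<Longrightarrow> q_min n E \<le> l"
  unfolding q_min_def by (rule Min_le[OF eig_finite]) simp

lemma qmin_ge: assumes "eigenvalue (signless_laplacian n E) l"
  and "\<And>k. eigenvalue (signless_laplacian n E) k \<Longrightarrow> c \<le> k"
  shows "c \<le> q_min n E"
proof -
  have "{k. eigenvalue (signless_laplacian n E) k} \<noteq> {}" using assms(1) by auto
  then show ?thesis unfolding q_min_def using assms(2) eig_finite by (subst Min_ge_iff) auto
qed

lemma eigvec_qf:
  fixes M :: "real mat"
  assumes M: "M \<in> carrier_mat n n" and ev: "eigenvector M v k"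
  shows "qf M n (\<lambda>i. v $ i) = k * nsq n (\<lambda>i. v $ i)" "nsq n (\<lambda>i. v $ i) > 0"
proof -
  have v: "v \<in> carrier_vec n" "v \<noteq> 0\<^sub>v n" "M *\<^sub>v v = k \<cdot>\<^sub>v v"
    using ev M unfolding eigenvector_def by auto
  have row: "(\<Sum>j<n. M $$ (i,j) * v $ j) = k * v $ i" if i: "i < n" for i
  proof -
    have c1: "(M *\<^sub>v v) $ i = (\<Sum>j<n. M$$(i,j) * v $ j)"
      using M v(1) i by (auto simp: scalar_prod_def atLeast0LessThan intro!: sum.cong)
    have c2: "(M *\<^sub>v v) $ i = k * v $ i" using v i by simp
    show ?thesis by (rule trans[OF c1[symmetric] c2])
  qed
  have "qf M n (\<lambda>i. v $ i) = (\<Sum>i<n. v $ i * (\<Sum>j<n. M $$ (i,j) * v $ j))"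
    unfolding qf_def by (simp add: sum_distrib_left mult_ac)
  also have "\<dots> = (\<Sum>i<n. v $ i * (k * v $ i))" by (intro sum.cong refl) (simp add: row)
  also have "\<dots> = k * nsq n (\<lambda>i. v $ i)" unfolding nsq_def
    by (simp add: sum_distrib_left power2_eq_square mult_ac)
  finally show "qf M n (\<lambda>i. v $ i) = k * nsq n (\<lambda>i. v $ i)" .
  obtain i where i: "i < n" "v $ i \<noteq> 0" using v by (metis eq_vecI carrier_vecD index_zero_vec)
  have "(v $ i)^2 \<le> nsq n (\<lambda>i. v $ i)" unfolding nsq_def using i by (intro member_le_sum) auto
  moreover have "(v $ i)^2 > 0" using i by simp
  ultimately show "nsq n (\<lambda>i. v $ i) > 0" by linarith
qed

lemma sum_ne_ind: fixes f :: "nat \<Rightarrow> real" assumes "u < n"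
  shows "(\<Sum>v<n. (if u \<noteq> v then 1 else 0) * f v) = (\<Sum>v<n. f v) - f u"
proof -
  have "(\<Sum>v<n. f v) = (\<Sum>v<n. (if u \<noteq> v then 1 else 0) * f v + (if u = v then f v else 0))"
    by (intro sum.cong refl) auto
  also have "\<dots> = (\<Sum>v<n. (if u \<noteq> v then 1 else 0) * f v) + f u"
    using assms by (simp add: sum.distrib sum.delta)
  finally show ?thesis by simp
qed

lemma Kr_facts:
  assumes r: "r \<ge> 3"
  shows "simple_graph r (\<lambda>i j. i \<noteq> j)" "\<not> has_clique r (\<lambda>i j. i \<noteq> j) (r+1)"
    "real r - 2 \<le> q_min r (\<lambda>i j. i \<noteq> j)"
proof -
  define E where "E = (\<lambda>i j::nat. i \<noteq> j)"
  show sg: "simple_graph r (\<lambda>i j. i \<noteq> j)" unfolding simple_graph_def using r by auto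
  show "\<not> has_clique r (\<lambda>i j. i \<noteq> j) (r+1)"
  proof
    assume "has_clique r (\<lambda>i j. i \<noteq> j) (r+1)"
    then obtain S where "S \<subseteq> {0..<r}" "card S = r + 1" unfolding has_clique_def by blast
    then show False using card_mono[of "{0..<r}" S] by simp
  qed
  obtain l where l: "eigenvalue (signless_laplacian r E) l"
    using min_eig_exists[OF sl_carrier sl_sym[of r E]] sg r unfolding E_def by fastforce
  show "real r - 2 \<le> q_min r (\<lambda>i j. i \<noteq> j)"
    unfolding E_def[symmetric]
  proof (rule qmin_ge[OF l])
    fix k assume "eigenvalue (signless_laplacian r E) k"
    then obtain v where ev: "eigenvector (signless_laplacian r E) v k" unfolding eigenvalue_def by blast
    define y where "y = (\<lambda>i. v $ i)"
    note e = eigvec_qf[OF sl_carrier ev, folded y_def]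
    define S where "S = (\<Sum>v<r. y v)"
    have "qf (signless_laplacian r E) r y = (\<Sum>u<r. y u * (\<Sum>v<r. (if u \<noteq> v then 1 else 0) * (y u + y v)))"
      unfolding qf_sl E_def by simp
    also have "\<dots> = (\<Sum>u<r. y u * ((real r - 2) * y u + S))"
    proof (intro sum.cong refl)
      fix u assume u: "u \<in> {..<r}"
      have "(\<Sum>v<r. (if u \<noteq> v then 1 else 0) * (y u + y v)) = (\<Sum>v<r. (y u + y v)) - (y u + y u)"
        using u by (intro sum_ne_ind) auto
      also have "\<dots> = (real r - 2) * y u + S" unfolding S_def by (simp add: sum.distrib algebra_simps)
      finally show "y u * (\<Sum>v<r. (if u \<noteq> v then 1 else 0) * (y u + y v)) = y u * ((real r - 2) * y u + S)" by simp
    qed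
    also have "\<dots> = (\<Sum>u<r. (real r - 2) * (y u)^2 + S * y u)"
      by (intro sum.cong refl) (simp add: algebra_simps power2_eq_square)
    also have "\<dots> = (real r - 2) * nsq r y + S * S"
      unfolding nsq_def by (simp add: sum.distrib sum_distrib_left[symmetric] S_def[symmetric])
    finally have "k * nsq r y = (real r - 2) * nsq r y + S * S" using e(1) by simp
    then have "k * nsq r y \<ge> (real r - 2) * nsq r y" by simp
    with e(2) show "real r - 2 \<le> k" by simp
  qed
qed


lemma card_filter_sum: "finite K \<Longrightarrow> real (card {j\<in>K. P j}) = (\<Sum>j\<in>K. if P j then 1 else 0)"
  by (simp add: sum.inter_filter[symmetric])

lemma upper_bound:
  assumes sg: "simple_graph n E" and nc: "\<not> has_clique n E (r+1)" and r: "r \<ge> 3"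
  shows "q_min n E \<le> (1 - 3 / (3 * real r - 1)) * real n"
proof -
  have n1: "n \<ge> 1" and irr: "\<And>i. i < n \<Longrightarrow> \<not> E i i"
    and sym: "\<And>i j. i < n \<Longrightarrow> j < n \<Longrightarrow> E i j \<Longrightarrow> E j i"
    using sg unfolding simple_graph_def by auto
  define Q where "Q = signless_laplacian n E"
  obtain l where ev: "eigenvalue Q l" and ray: "\<And>y. l * nsq n y \<le> qf Q n y"
    using min_eig_exists[OF sl_carrier sl_sym[OF sg] n1] unfolding Q_def by blast
  have ql: "q_min n E \<le> l" using qmin_le ev unfolding Q_def by blast
  define clq where "clq K \<longleftrightarrow> K \<subseteq> {..<n} \<and> (\<forall>i\<in>K. \<forall>j\<in>K. i \<noteq> j \<longrightarrow> E i j)" for K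
  define C where "C = {K. clq K}"
  have finC: "finite C" unfolding C_def clq_def
    by (rule finite_subset[of _ "Pow {..<n}"]) auto
  have "{0} \<in> C" unfolding C_def clq_def using n1 by auto
  then have neC: "card ` C \<noteq> {}" by auto
  define m where "m = Max (card ` C)"
  have "m \<in> card ` C" unfolding m_def using finC neC by (intro Max_in) auto
  then obtain K where K: "clq K" and kK: "card K = m" unfolding C_def by auto
  have maxc: "card S \<le> m" if "clq S" for S
    unfolding m_def using finC that unfolding C_def by (intro Max_ge) auto
  define k where "k = card K"
  have Ksub: "K \<subseteq> {..<n}" and Kcl: "\<And>i j. i \<in> K \<Longrightarrow> j \<in> K \<Longrightarrow> i \<noteq> j \<Longrightarrow> E i j"
    using K unfolding clq_def by auto
  have finK: "finite K" using Ksub finite_subset by blast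
  have k1: "k \<ge> 1" using maxc[of "{0}"] n1 kK unfolding k_def clq_def by auto
  have maxk: "\<And>S. clq S \<Longrightarrow> card S \<le> k" using maxc kK k_def by simp
  have kr: "k \<le> r"
  proof (rule ccontr)
    assume "\<not> k \<le> r"
    then obtain S where S: "S \<subseteq> K" "card S = r + 1"
      using obtain_subset_with_card_n[of "r+1" K] k_def by force
    then have "has_clique n E (r+1)" unfolding has_clique_def
      using Ksub Kcl by (intro exI[of _ S]) (auto simp: atLeast0LessThan subset_iff)
    with nc show False by simp
  qed
  define A where "A i = {w. w < n \<and> \<not> E w i \<and> (\<forall>j\<in>K. j \<noteq> i \<longrightarrow> E w j)}" for i
  define a where "a i = real (card (A i))" for i
  have Asub: "A i \<subseteq> {..<n}" for i unfolding A_def by auto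
  have F1: "i \<in> A i" if "i \<in> K" for i
    using that Ksub irr Kcl unfolding A_def by auto
  have F2: "\<not> E u v" if i: "i \<in> K" and u: "u \<in> A i" and v: "v \<in> A i" for i u v
  proof
    assume uv: "E u v"
    have un: "u < n" "\<not> E u i" "\<And>j. j \<in> K \<Longrightarrow> j \<noteq> i \<Longrightarrow> E u j" using u unfolding A_def by auto
    have vn: "v < n" "\<not> E v i" "\<And>j. j \<in> K \<Longrightarrow> j \<noteq> i \<Longrightarrow> E v j" using v unfolding A_def by auto
    have "u \<noteq> v" using uv irr un by auto
    have uK: "u \<notin> K - {i}" using un irr by auto
    have vK: "v \<notin> K - {i}" using vn irr by auto
    define S where "S = insert u (insert v (K - {i}))"
    have "clq S" unfolding clq_def S_def
    proof (intro conjI ballI impI)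
      show "insert u (insert v (K - {i})) \<subseteq> {..<n}" using un vn Ksub by auto
    next
      fix x y assume x: "x \<in> insert u (insert v (K - {i}))" and y: "y \<in> insert u (insert v (K - {i}))"
        and xy: "x \<noteq> y"
      have yn: "y < n" and xn: "x < n" using x y un vn Ksub by auto
      show "E x y"
        using x y xy uv sym[OF un(1) vn(1) uv] un(3) vn(3) Kcl sym[OF un(1)] sym[OF vn(1)] Ksub
        by auto
    qed
    moreover have "card S = k + 1" unfolding S_def using uK vK \<open>u \<noteq> v\<close> finK i k1
      by (simp add: k_def card_Diff_singleton)
    ultimately show False using maxk by fastforce
  qed
  have F3: "A i \<inter> A j = {}" if "i \<in> K" "j \<in> K" "i \<noteq> j" for i j
    using that unfolding A_def by auto
  define c where "c w = card {j\<in>K. E w j}" for w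
  have F4: "c w \<le> k - 1 \<and> (c w = k - 1 \<longrightarrow> (\<exists>i\<in>K. w \<in> A i))" if w: "w < n" for w
  proof -
    have sub: "{j\<in>K. E w j} \<subseteq> K" by auto
    have ck: "c w \<le> k" unfolding c_def k_def using card_mono[OF finK sub] .
    have "c w \<noteq> k"
    proof
      assume "c w = k"
      then have eq: "{j\<in>K. E w j} = K" using card_subset_eq[OF finK sub] unfolding c_def k_def by simp
      then have wK: "w \<notin> K" using irr w by auto
      have wj: "E w j" "E j w" if "j \<in> K" for j
      proof -
        show "E w j" using eq that by blast
        then show "E j w" using sym[OF w] that Ksub by auto
      qed
      have "clq (insert w K)" unfolding clq_def using w Ksub Kcl wj by auto
      then have "card (insert w K) \<le> k" by (rule maxk)
      then show False using wK finK unfolding k_def by simp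
    qed
    with ck have c1: "c w \<le> k - 1" by simp
    have "\<exists>i\<in>K. w \<in> A i" if cw: "c w = k - 1"
    proof -
      have "card (K - {j\<in>K. E w j}) = 1"
        using cw k1 card_Diff_subset[OF finite_subset[OF sub finK] sub] unfolding c_def k_def by simp
      then obtain i where D: "K - {j\<in>K. E w j} = {i}" by (rule card_1_singletonE)
      then have "i \<in> K" "\<not> E w i" "\<And>j. j \<in> K \<Longrightarrow> j \<noteq> i \<Longrightarrow> E w j" by auto
      then show ?thesis using w unfolding A_def by auto
    qed
    with c1 show ?thesis by blast
  qed
  have F4': "real (c w) \<le> real k - 2 + (\<Sum>i\<in>K. if w \<in> A i then 1 else 0)" if w: "w < n" for w
  proof (cases "\<exists>i\<in>K. w \<in> A i")
    case True
    then obtain i where i: "i \<in> K" "w \<in> A i" by blast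
    have "(1::real) = (if w \<in> A i then 1 else 0)" using i by simp
    also have "\<dots> \<le> (\<Sum>i\<in>K. if w \<in> A i then 1 else 0)"
      using i finK by (intro member_le_sum) auto
    finally have "1 \<le> (\<Sum>i\<in>K. if w \<in> A i then 1 else (0::real))" .
    moreover have "real (c w) \<le> real k - 1" using F4[OF w] k1 by linarith
    ultimately show ?thesis by linarith
  next
    case False
    then have "c w \<noteq> k - 1" using F4[OF w] by blast
    then have "c w < k - 1" using F4[OF w] by linarith
    then have "real (c w) \<le> real k - 2" using k1 by linarith
    moreover have "(\<Sum>i\<in>K. if w \<in> A i then 1 else 0::real) \<ge> 0" by (intro sum_nonneg) auto
    ultimately show ?thesis by linarith
  qed
  have F5: "(\<Sum>v\<in>K. real (degree n E v)) = (\<Sum>w<n. real (c w))"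
  proof -
    have "(\<Sum>v\<in>K. real (degree n E v)) = (\<Sum>v\<in>K. \<Sum>w<n. if E v w then 1 else 0)"
      by (simp add: degree_sum)
    also have "\<dots> = (\<Sum>w<n. \<Sum>v\<in>K. if E v w then 1 else 0)" by (rule sum.swap)
    also have "\<dots> = (\<Sum>w<n. \<Sum>v\<in>K. if E w v then 1 else 0)"
    proof (intro sum.cong refl)
      fix w v assume "w \<in> {..<n}" "v \<in> K"
      then have "w < n" "v < n" using Ksub by auto
      then show "(if E v w then 1 else 0::real) = (if E w v then 1 else 0)" using sym by metis
    qed
    also have "\<dots> = (\<Sum>w<n. real (c w))" unfolding c_def using finK by (simp add: card_filter_sum)
    finally show ?thesis .
  qed
  define SA where "SA = (\<Sum>i\<in>K. a i)"
  have F6: "(\<Sum>v\<in>K. real (degree n E v)) \<le> real n * (real k - 2) + SA"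
  proof -
    have "(\<Sum>w<n. real (c w)) \<le> (\<Sum>w<n. real k - 2 + (\<Sum>i\<in>K. if w \<in> A i then 1 else 0))"
      using F4' by (intro sum_mono) auto
    also have "\<dots> = real n * (real k - 2) + (\<Sum>i\<in>K. \<Sum>w<n. if w \<in> A i then 1 else 0)"
      by (simp add: sum.distrib sum.swap[of _ K])
    also have "(\<Sum>i\<in>K. \<Sum>w<n. if w \<in> A i then 1 else 0) = SA"
      unfolding SA_def a_def by (intro sum.cong refl card_ind Asub)
    finally show ?thesis using F5 by simp
  qed
  have F7: "l \<le> real (degree n E v)" if v: "v < n" for v
  proof -
    define e where "e = (\<lambda>w. if w = v then 1 else 0::real)"
    have "nsq n e = (\<Sum>i<n. if i = v then 1 else 0)" unfolding nsq_def e_def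
      by (intro sum.cong refl) auto
    then have ne: "nsq n e = 1" using v by simp
    have "qf Q n e = (\<Sum>i<n. if i = v then Q $$ (v,v) else 0)" unfolding qf_def e_def
    proof (intro sum.cong refl)
      fix i assume "i \<in> {..<n}"
      have "(\<Sum>j<n. Q $$ (i, j) * (if i = v then 1 else 0) * (if j = v then 1 else 0))
         = (\<Sum>j<n. if j = v then Q $$ (i, j) * (if i = v then 1 else 0) else 0)"
        by (intro sum.cong refl) auto
      also have "\<dots> = Q $$ (i, v) * (if i = v then 1 else 0)" using v by simp
      finally show "(\<Sum>j<n. Q $$ (i, j) * (if i = v then 1 else 0) * (if j = v then 1 else 0))
         = (if i = v then Q $$ (v,v) else 0)" by simp
    qed
    also have "\<dots> = Q $$ (v,v)" using v by simp
    also have "\<dots> = real (degree n E v)" unfolding Q_def signless_laplacian_def using v irr by simp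
    finally show ?thesis using ray[of e] ne by simp
  qed
  have F8: "l \<le> real n - a i - a j" if i: "i \<in> K" and j: "j \<in> K" and ij: "i \<noteq> j" for i j
  proof -
    define x where "x = (\<lambda>w. (if w \<in> A i then 1 else 0) - (if w \<in> A j then 1 else 0::real))"
    have dis: "A i \<inter> A j = {}" using F3 i j ij by auto
    define R where "R = (\<Sum>v<n. if v \<notin> A i \<and> v \<notin> A j then 1 else 0::real)"
    have R: "R = real n - a i - a j"
    proof -
      have "R = (\<Sum>v<n. 1 - (if v \<in> A i then 1 else 0) - (if v \<in> A j then 1 else 0::real))"
        unfolding R_def using dis by (intro sum.cong refl) auto
      also have "\<dots> = real n - a i - a j" unfolding a_def
        by (simp add: sum_subtractf card_ind[OF Asub])
      finally show ?thesis .
    qed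
    have nx: "nsq n x = a i + a j"
    proof -
      have "nsq n x = (\<Sum>v<n. (if v \<in> A i then 1 else 0) + (if v \<in> A j then 1 else 0::real))"
        unfolding nsq_def x_def using dis by (intro sum.cong refl) (auto simp: power2_eq_square)
      also have "\<dots> = a i + a j" unfolding a_def by (simp add: sum.distrib card_ind[OF Asub])
      finally show ?thesis .
    qed
    have qx: "qf Q n x \<le> (a i + a j) * R"
    proof -
      have "qf Q n x = (\<Sum>u<n. x u * (\<Sum>v<n. (if E u v then 1 else 0) * (x u + x v)))"
        unfolding Q_def qf_sl ..
      also have "\<dots> \<le> (\<Sum>u<n. ((if u \<in> A i then 1 else 0) + (if u \<in> A j then 1 else 0)) * R)"
      proof (rule sum_mono)
        fix u assume u: "u \<in> {..<n}"
        consider (I) "u \<in> A i" | (J) "u \<in> A j" | (N) "u \<notin> A i" "u \<notin> A j" by blast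
        then show "x u * (\<Sum>v<n. (if E u v then 1 else 0) * (x u + x v))
             \<le> ((if u \<in> A i then 1 else 0) + (if u \<in> A j then 1 else 0)) * R"
        proof cases
          case I
          then have uj: "u \<notin> A j" using dis by auto
          have "(\<Sum>v<n. (if E u v then 1 else 0) * (x u + x v)) \<le> R"
            unfolding R_def
          proof (rule sum_mono)
            fix v assume "v \<in> {..<n}"
            show "(if E u v then 1 else 0) * (x u + x v) \<le> (if v \<notin> A i \<and> v \<notin> A j then 1 else 0)"
              using I uj F2[OF i I, of v] dis unfolding x_def by auto
          qed
          then show ?thesis using I uj unfolding x_def by simp
        next
          case J
          then have ui: "u \<notin> A i" using dis by auto
          have "(\<Sum>v<n. (if E u v then 1 else 0) * (- x u - x v)) \<le> R"
            unfolding R_def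
          proof (rule sum_mono)
            fix v assume "v \<in> {..<n}"
            show "(if E u v then 1 else 0) * (- x u - x v) \<le> (if v \<notin> A i \<and> v \<notin> A j then 1 else 0)"
              using J ui F2[OF j J, of v] dis unfolding x_def by auto
          qed
          moreover have "x u * (\<Sum>v<n. (if E u v then 1 else 0) * (x u + x v))
              = (\<Sum>v<n. (if E u v then 1 else 0) * (- x u - x v))"
            using J ui unfolding x_def by (simp add: sum_negf[symmetric] algebra_simps)
          ultimately show ?thesis using J ui by simp
        next
          case N
          then show ?thesis unfolding x_def by simp
        qed
      qed
      also have "\<dots> = (a i + a j) * R" unfolding a_def
        by (simp add: sum_distrib_right[symmetric] sum.distrib card_ind[OF Asub])
      finally show ?thesis .
    qed
    have "l * (a i + a j) \<le> (a i + a j) * R" using ray[of x] nx qx by simp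
    moreover have "a i \<ge> 1" unfolding a_def using F1[OF i] Asub[of i]
      by (auto simp: Suc_le_eq card_gt_0_iff finite_subset[OF _ finite_lessThan])
    moreover have "a j \<ge> 0" unfolding a_def by simp
    ultimately have "l \<le> R" by (simp add: mult.commute)
    then show ?thesis using R by simp
  qed
  have kl: "real k * l \<le> real n * (real k - 2) + SA"
  proof -
    have "(\<Sum>v\<in>K. l) \<le> (\<Sum>v\<in>K. real (degree n E v))"
      using F7 Ksub by (intro sum_mono) auto
    then show ?thesis using F6 k_def by simp
  qed
  have alpha: "l \<le> (1 - 3 / (3 * real r - 1)) * real n"
  proof (cases "k = 1")
    case True
    then obtain i where Ki: "K = {i}" using k_def card_1_singletonE by metis
    have "a i \<le> real n" unfolding a_def using card_mono[OF finite_lessThan Asub[of i]] by simp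
    then have "l \<le> 0" using kl True Ki SA_def by simp
    moreover have "(1 - 3 / (3 * real r - 1)) * real n \<ge> 0" using r by (intro mult_nonneg_nonneg) (auto simp: field_simps)
    ultimately show ?thesis by linarith
  next
    case False
    then have k2: "k \<ge> 2" using k1 by simp
    have P1: "(\<Sum>i\<in>K. \<Sum>j\<in>K - {i}. a i + a j) = 2 * (real k - 1) * SA"
    proof -
      have "(\<Sum>i\<in>K. \<Sum>j\<in>K - {i}. a i + a j) = (\<Sum>i\<in>K. (real k - 1) * a i + (SA - a i))"
      proof (intro sum.cong refl)
        fix i assume i: "i \<in> K"
        have "(\<Sum>j\<in>K - {i}. a i + a j) = real (card (K - {i})) * a i + (\<Sum>j\<in>K - {i}. a j)"
          by (simp add: sum.distrib)
        also have "real (card (K - {i})) = real k - 1" using i finK k1 k_def by (simp add: of_nat_diff)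
        also have "(\<Sum>j\<in>K - {i}. a j) = SA - a i" unfolding SA_def using i finK by (simp add: sum_diff1)
        finally show "(\<Sum>j\<in>K - {i}. a i + a j) = (real k - 1) * a i + (SA - a i)" .
      qed
      also have "\<dots> = (real k - 1) * SA + (real k * SA - SA)"
        unfolding SA_def by (simp add: sum.distrib sum_distrib_left sum_subtractf k_def)
      finally show ?thesis by (simp add: algebra_simps)
    qed
    have P2: "(\<Sum>i\<in>K. \<Sum>j\<in>K - {i}. a i + a j) \<le> (\<Sum>i\<in>K. \<Sum>j\<in>K - {i}. real n - l)"
    proof (intro sum_mono)
      fix i j assume "i \<in> K" "j \<in> K - {i}"
      then have "l \<le> real n - a i - a j" using F8[of i j] by auto
      then show "a i + a j \<le> real n - l" by linarith
    qed
    have P3: "(\<Sum>i\<in>K. \<Sum>j\<in>K - {i}. real n - l) = real k * (real k - 1) * (real n - l)"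
    proof -
      have "(\<Sum>i\<in>K. \<Sum>j\<in>K - {i}. real n - l) = (\<Sum>i\<in>K. (real k - 1) * (real n - l))"
        using finK k1 k_def by (intro sum.cong refl) (simp add: of_nat_diff)
      then show ?thesis using k_def by simp
    qed
    have ineq: "2 * (real k - 1) * SA \<le> real k * (real k - 1) * (real n - l)" using P1 P2 P3 by linarith
    have e1: "2 * (real k - 1) * SA = (real k - 1) * (2 * SA)" by simp
    have e2: "real k * (real k - 1) * (real n - l) = (real k - 1) * (real k * (real n - l))" by simp
    have kpos: "real k - 1 > 0" using k2 by simp
    have sa: "2 * SA \<le> real k * (real n - l)"
      using ineq unfolding e1 e2 using mult_le_cancel_left_pos[OF kpos] by blast
    have e3: "real k * (real n - l) = real k * real n - real k * l" by (simp add: right_diff_distrib)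
    have e4: "real n * (real k - 2) = real k * real n - 2 * real n" by (simp add: algebra_simps)
    have "3 * (real k * l) \<le> 3 * (real k * real n) - 4 * real n" using kl sa e3 e4 by linarith
    then have "4 * real n \<le> (real n - l) * (3 * real k)" by (simp add: algebra_simps)
    then have "4 * real n / (3 * real k) \<le> real n - l" using k2 by (simp add: pos_divide_le_eq)
    then have l1: "l \<le> real n - 4 * real n / (3 * real k)" by linarith
    have "4 * real n / (3 * real r) \<le> 4 * real n / (3 * real k)"
      using kr k2 by (intro divide_left_mono) auto
    moreover have "3 / (3 * real r - 1) \<le> 4 / (3 * real r)"
      using r by (simp add: divide_simps)
    then have "3 / (3 * real r - 1) * real n \<le> 4 / (3 * real r) * real n"
      by (intro mult_right_mono) auto
    ultimately show ?thesis using l1 by (simp add: algebra_simps)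
  qed
  show ?thesis using ql alpha by simp
qed

theorem corollary7:
  fixes r :: nat
  assumes "r \<ge> 3"
  shows "1 - 2 / real r \<le> c_const r \<and> c_const r \<le> 1 - 3 / (3 * real r - 1)"
proof -
  define X where "X = {q_min n E / real n | n E. simple_graph n E \<and> \<not> has_clique n E (r + 1)}"
  have cc: "c_const r = Sup X" unfolding c_const_def X_def ..
  have ub: "x \<le> 1 - 3 / (3 * real r - 1)" if xX: "x \<in> X" for x
  proof -
    obtain n E where x: "x = q_min n E / real n" and sg: "simple_graph n E"
      and nc: "\<not> has_clique n E (r + 1)" using xX unfolding X_def by blast
    have n: "real n > 0" using sg unfolding simple_graph_def by auto
    have "q_min n E \<le> (1 - 3 / (3 * real r - 1)) * real n" by (rule upper_bound[OF sg nc assms])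
    then show ?thesis unfolding x using n by (simp add: pos_divide_le_eq)
  qed
  note K = Kr_facts[OF assms]
  have mem: "q_min r (\<lambda>i j. i \<noteq> j) / real r \<in> X" unfolding X_def using K(1,2) by blast
  then have ne: "X \<noteq> {}" by auto
  have bdd: "bdd_above X" using ub by (intro bdd_aboveI) blast
  have 1: "Sup X \<le> 1 - 3 / (3 * real r - 1)" using ne ub by (intro cSup_least) auto
  have 2: "q_min r (\<lambda>i j. i \<noteq> j) / real r \<le> Sup X" using mem bdd by (intro cSup_upper)
  have rpos: "real r > 0" using assms by simp
  have "1 - 2 / real r = (real r - 2) / real r" using rpos by (simp add: field_simps)
  also have "\<dots> \<le> q_min r (\<lambda>i j. i \<noteq> j) / real r" using K(3) rpos by (simp add: divide_right_mono)
  finally have 3: "1 - 2 / real r \<le> Sup X" using 2 by linarith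
  show ?thesis using 1 3 cc by simp
qed

end
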